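(* Let $X$ be a normed space and $Y$ a Banach space, and let $l\in\{-1,1\}$. Suppose that an odd mapping $f:X\to Y$ satisfies $\|D_f(x,y)\|\le\phi(x,y)$ for all $x,y\in X$, where $\phi:X\times X\to[0,\infty)$ is a function such that $$\sum_{i=1}^{\infty}8^{il}\phi\left(\frac{x}{2^{il}},\frac{x}{2^{il}}\right)<\infty$$ for all $x\in X$ and $\lim_{n\to\infty}8^{ln}\phi\left(\frac{x}{2^{ln}},\frac{y}{2^{ln}}\right)=0$ for all $x,y\in X$. Then the limit $$C(x)=\lim_{n\to\infty}8^{ln}\left[f\left(\frac{x}{2^{l(n-l)}}\right)-2f\left(\frac{x}{2^{ln}}\right)\right]$$ exists for all $x\in X$, and $C:X\to Y$ is the unique cubic mapping which satisfies $$3C(x+3y)-C(3x+y)=12[C(x+y)+C(x-y)]-16[C(x)+C(y)]+12C(2y)-4C(2x)\quad(x,y\in X)$$ and $$\|f(2x)-2f(x)-C(x)\|\le\frac12\sum_{i=\frac{|l-1|}{2}}^{\infty}8^{il}\phi\left(\frac{x}{2^{l(i+l)}},\frac{x}{2^{l(i+l)}}\right)$$ for all $x\in X$ (the summation starts at $i=0$ if $l=1$ and at $i=1$ if $l=-1$).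
   Context: For a mapping $f:X\to Y$ define $$D_f(x,y)=3f(x+3y)-f(3x+y)-12[f(x+y)+f(x-y)]+16[f(x)+f(y)]-12f(2y)+4f(2x)$$ for $x,y\in X$. A mapping $g:X\to Y$ is called cubic if $g(x+2y)-3g(x+y)+3g(x)-g(x-y)=6g(y)$ for all $x,y\in X$. *)

theory Defs
  imports "HOL-Analysis.Analysis"
begin

definition Dfun :: "('a::real_normed_vector \<Rightarrow> 'b::real_normed_vector) \<Rightarrow> 'a \<Rightarrow> 'a \<Rightarrow> 'b" where
  "Dfun f x y = 3 *\<^sub>R f (x + 3 *\<^sub>R y) - f (3 *\<^sub>R x + y)
      - 12 *\<^sub>R (f (x + y) + f (x - y)) + 16 *\<^sub>R (f x + f y)
      - 12 *\<^sub>R f (2 *\<^sub>R y) + 4 *\<^sub>R f (2 *\<^sub>R x)"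

definition cubic :: "('a::real_normed_vector \<Rightarrow> 'b::real_normed_vector) \<Rightarrow> bool" where
  "cubic g \<longleftrightarrow> (\<forall>x y. g (x + 2 *\<^sub>R y) - 3 *\<^sub>R g (x + y) + 3 *\<^sub>R g x - g (x - y) = 6 *\<^sub>R g y)"

end

theory Submission
  imports Defs
begin

lemma keyD:
  fixes f :: "'a::real_normed_vector \<Rightarrow> 'b::real_normed_vector"
  assumes f0: "f 0 = 0"
  shows "Dfun f z z = 2 *\<^sub>R (f (4 *\<^sub>R z) - 10 *\<^sub>R f (2 *\<^sub>R z) + 16 *\<^sub>R f z)"
proof -
  have a1: "z + 3 *\<^sub>R z = 4 *\<^sub>R z" by norm
  have a2: "3 *\<^sub>R z + z = 4 *\<^sub>R z" by norm
  have a3: "z + z = 2 *\<^sub>R z" by norm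
  show ?thesis unfolding Dfun_def a1 a2 a3 using f0 by simp norm
qed

lemma cubic_of_D:
  fixes C :: "'a::real_normed_vector \<Rightarrow> 'b::real_normed_vector"
  assumes D: "\<forall>x y. Dfun C x y = 0" and odd: "\<forall>x. C (-x) = - C x"
    and hom: "\<forall>x. C (2 *\<^sub>R x) = 8 *\<^sub>R C x"
  shows "cubic C"
  unfolding cubic_def
proof (intro allI)
  fix x y :: 'a
  have P: "C a = 8 *\<^sub>R C b" if "a = 2 *\<^sub>R b" for a b using that hom by simp
  have N: "C a = - (8 *\<^sub>R C b)" if "a = - (2 *\<^sub>R b)" for a b using that hom odd by simp
  have M: "C a = - C b" if "a = - b" for a b using that odd by simp
  note D1 = D[rule_format, of "y - x" "x + y", unfolded Dfun_def]
  note D2 = D[rule_format, of "- x - y" "x - y", unfolded Dfun_def]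
  have "C ((y - x) + 3 *\<^sub>R (x + y)) = 8 *\<^sub>R C (x + 2 *\<^sub>R y)" by (rule P) norm
  moreover have "C (3 *\<^sub>R (y - x) + (x + y)) = - (8 *\<^sub>R C (x - 2 *\<^sub>R y))" by (rule N) norm
  moreover have "C ((y - x) + (x + y)) = 8 *\<^sub>R C y" by (rule P) norm
  moreover have "C ((y - x) - (x + y)) = - (8 *\<^sub>R C x)" by (rule N) norm
  moreover have "C (y - x) = - C (x - y)" by (rule M) norm
  moreover have "C (2 *\<^sub>R (x + y)) = 8 *\<^sub>R C (x + y)" by (rule P) simp
  moreover have "C (2 *\<^sub>R (y - x)) = - (8 *\<^sub>R C (x - y))" by (rule N) norm
  ultimately have e1: "3 *\<^sub>R (8 *\<^sub>R C (x + 2 *\<^sub>R y)) - (- (8 *\<^sub>R C (x - 2 *\<^sub>R y)))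
      - 12 *\<^sub>R (8 *\<^sub>R C y + (- (8 *\<^sub>R C x))) + 16 *\<^sub>R (- C (x - y) + C (x + y))
      - 12 *\<^sub>R (8 *\<^sub>R C (x + y)) + 4 *\<^sub>R (- (8 *\<^sub>R C (x - y))) = 0"
    using D1 by simp
  have "C ((- x - y) + 3 *\<^sub>R (x - y)) = 8 *\<^sub>R C (x - 2 *\<^sub>R y)" by (rule P) norm
  moreover have "C (3 *\<^sub>R (- x - y) + (x - y)) = - (8 *\<^sub>R C (x + 2 *\<^sub>R y))" by (rule N) norm
  moreover have "C ((- x - y) + (x - y)) = - (8 *\<^sub>R C y)" by (rule N) norm
  moreover have "C ((- x - y) - (x - y)) = - (8 *\<^sub>R C x)" by (rule N) norm
  moreover have "C (- x - y) = - C (x + y)" by (rule M) norm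
  moreover have "C (2 *\<^sub>R (x - y)) = 8 *\<^sub>R C (x - y)" by (rule P) simp
  moreover have "C (2 *\<^sub>R (- x - y)) = - (8 *\<^sub>R C (x + y))" by (rule N) norm
  ultimately have e2: "3 *\<^sub>R (8 *\<^sub>R C (x - 2 *\<^sub>R y)) - (- (8 *\<^sub>R C (x + 2 *\<^sub>R y)))
      - 12 *\<^sub>R (- (8 *\<^sub>R C y) + (- (8 *\<^sub>R C x))) + 16 *\<^sub>R (- C (x + y) + C (x - y))
      - 12 *\<^sub>R (8 *\<^sub>R C (x - y)) + 4 *\<^sub>R (- (8 *\<^sub>R C (x + y))) = 0"
    using D2 by simp
  define E1 where "E1 = 3 *\<^sub>R (8 *\<^sub>R C (x + 2 *\<^sub>R y)) - (- (8 *\<^sub>R C (x - 2 *\<^sub>R y)))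
      - 12 *\<^sub>R (8 *\<^sub>R C y + (- (8 *\<^sub>R C x))) + 16 *\<^sub>R (- C (x - y) + C (x + y))
      - 12 *\<^sub>R (8 *\<^sub>R C (x + y)) + 4 *\<^sub>R (- (8 *\<^sub>R C (x - y)))"
  define E2 where "E2 = 3 *\<^sub>R (8 *\<^sub>R C (x - 2 *\<^sub>R y)) - (- (8 *\<^sub>R C (x + 2 *\<^sub>R y)))
      - 12 *\<^sub>R (- (8 *\<^sub>R C y) + (- (8 *\<^sub>R C x))) + 16 *\<^sub>R (- C (x + y) + C (x - y))
      - 12 *\<^sub>R (8 *\<^sub>R C (x - y)) + 4 *\<^sub>R (- (8 *\<^sub>R C (x + y)))"
  have id: "64 *\<^sub>R (C (x + 2 *\<^sub>R y) - 3 *\<^sub>R C (x + y) + 3 *\<^sub>R C x - C (x - y) - 6 *\<^sub>R C y) = 3 *\<^sub>R E1 - E2"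
    unfolding E1_def E2_def by norm
  have "E1 = 0" "E2 = 0" using e1 e2 unfolding E1_def E2_def by simp_all
  then have "64 *\<^sub>R (C (x + 2 *\<^sub>R y) - 3 *\<^sub>R C (x + y) + 3 *\<^sub>R C x - C (x - y) - 6 *\<^sub>R C y) = 0"
    using id by simp
  then show "C (x + 2 *\<^sub>R y) - 3 *\<^sub>R C (x + y) + 3 *\<^sub>R C x - C (x - y) = 6 *\<^sub>R C y"
    by simp
qed



lemma lincomb3:
  fixes L R :: "'b::real_vector"
  assumes "L1 = R1" "L2 = R2" "L3 = R3"
    "L - R = a *\<^sub>R (L1 - R1) + b *\<^sub>R (L2 - R2) + c *\<^sub>R (L3 - R3)"
  shows "L = R"
  using assms by simp

lemma cubic_hom:
  fixes F :: "'a::real_normed_vector \<Rightarrow> 'b::real_normed_vector"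
  assumes "cubic F"
  shows "F (2 *\<^sub>R x) = 8 *\<^sub>R F x"
proof -
  have c: "\<And>x y. F (x + 2 *\<^sub>R y) - 3 *\<^sub>R F (x + y) + 3 *\<^sub>R F x - F (x - y) = 6 *\<^sub>R F y"
    using assms unfolding cubic_def by blast
  have a: "F (2 *\<^sub>R x) - 3 *\<^sub>R F x + 3 *\<^sub>R F 0 - F (- x) = 6 *\<^sub>R F x" using c[of 0 x] by simp
  have b: "F (2 *\<^sub>R (-x)) - 3 *\<^sub>R F (-x) + 3 *\<^sub>R F 0 - F x = 6 *\<^sub>R F (-x)" using c[of 0 "-x"] by simp
  have z: "F 0 = 0" using c[of 0 0] by simp
  have d0: "-x + 2 *\<^sub>R x = x" "-x + x = 0" "-x - x = 2 *\<^sub>R (-x)" by norm+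
  have d: "F x - 3 *\<^sub>R F 0 + 3 *\<^sub>R F (-x) - F (2 *\<^sub>R (-x)) = 6 *\<^sub>R F x"
    using c[of "-x" x] unfolding d0 .
  have o: "F (-x) = - F x"
    by (rule lincomb3[OF b d z, where a="-1/6" and b="-1/6" and c=0]) norm
  show ?thesis
    by (rule lincomb3[OF a z o, where a=1 and b="-3" and c=1]) norm
qed


lemma cauchy_core:
  fixes a :: "nat \<Rightarrow> 'b::banach" and b :: "nat \<Rightarrow> real"
  assumes sb: "summable b" and le: "\<And>n. norm (a (Suc n) - a n) \<le> b n"
  shows "\<exists>L. a \<longlonglongrightarrow> L \<and> norm (a 0 - L) \<le> suminf b"
proof -
  define d where "d n = a (Suc n) - a n" for n
  have le': "norm (norm (d n)) \<le> b n" for n using le[of n] unfolding d_def by simp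
  have sn: "summable (\<lambda>n. norm (d n))"
    by (rule summable_comparison_test'[OF sb, where N=0]) (rule le')
  then have sd: "summable d" by (rule summable_norm_cancel)
  have tel0: "(\<Sum>k<n. d k) = a n - a 0" for n
    unfolding d_def by (rule sum_lessThan_telescope)
  have tel: "a n = a 0 + (\<Sum>k<n. d k)" for n unfolding tel0 by simp
  have "(\<lambda>n. a 0 + (\<Sum>k<n. d k)) \<longlonglongrightarrow> a 0 + suminf d"
    by (intro tendsto_add tendsto_const summable_LIMSEQ sd)
  then have lim: "a \<longlonglongrightarrow> a 0 + suminf d" unfolding tel[symmetric] .
  have "norm (a 0 - (a 0 + suminf d)) = norm (suminf d)" by simp
  also have "\<dots> \<le> (\<Sum>n. norm (d n))" by (rule summable_norm[OF sn])
  also have "\<dots> \<le> suminf b" using le' by (intro suminf_le sn sb) simp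
  finally show ?thesis using lim by blast
qed
lemma tail_zero:
  fixes u :: "nat \<Rightarrow> real"
  assumes "summable u"
  shows "(\<lambda>n. \<Sum>j. u (j + n)) \<longlonglongrightarrow> 0"
proof -
  have e: "(\<Sum>j. u (j + n)) = suminf u - sum u {..<n}" for n
    using suminf_split_initial_segment[OF assms, of n] by simp
  have "(\<lambda>n. suminf u - sum u {..<n}) \<longlonglongrightarrow> suminf u - suminf u"
    by (intro tendsto_intros summable_LIMSEQ assms)
  then show ?thesis unfolding e by simp
qed

lemma hom_pow:
  fixes F :: "'a::real_normed_vector \<Rightarrow> 'b::real_normed_vector"
  assumes h: "\<forall>x. F (2 *\<^sub>R x) = 8 *\<^sub>R F x"
  shows "F ((2::real) ^ n *\<^sub>R x) = (8::real) ^ n *\<^sub>R F x"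
proof (induction n)
  case 0 then show ?case by simp
next
  case (Suc n)
  have "F ((2::real) ^ Suc n *\<^sub>R x) = F (2 *\<^sub>R ((2::real) ^ n *\<^sub>R x))" by simp
  also have "\<dots> = 8 *\<^sub>R F ((2::real) ^ n *\<^sub>R x)" using h by blast
  finally show ?case using Suc by simp
qed

lemma Dfun_scale:
  fixes g :: "'a::real_normed_vector \<Rightarrow> 'b::real_normed_vector"
  shows "c *\<^sub>R Dfun g (r *\<^sub>R x) (r *\<^sub>R y) = Dfun (\<lambda>z. c *\<^sub>R g (r *\<^sub>R z)) x y"
proof -
  have e: "r *\<^sub>R x + 3 *\<^sub>R (r *\<^sub>R y) = r *\<^sub>R (x + 3 *\<^sub>R y)"
    "3 *\<^sub>R (r *\<^sub>R x) + r *\<^sub>R y = r *\<^sub>R (3 *\<^sub>R x + y)"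
    "r *\<^sub>R x + r *\<^sub>R y = r *\<^sub>R (x + y)"
    "r *\<^sub>R x - r *\<^sub>R y = r *\<^sub>R (x - y)"
    "2 *\<^sub>R (r *\<^sub>R x) = r *\<^sub>R (2 *\<^sub>R x)"
    "2 *\<^sub>R (r *\<^sub>R y) = r *\<^sub>R (2 *\<^sub>R y)"
    by (simp_all add: scaleR_right_distrib scaleR_right_diff_distrib)
  show ?thesis unfolding Dfun_def e
    by (simp only: scaleR_right_diff_distrib scaleR_right_distrib scaleR_scaleR mult.commute[of c])
qed

lemma lincomb1:
  fixes L R :: "'b::real_vector"
  assumes "L1 = R1" "L - R = a *\<^sub>R (L1 - R1)"
  shows "L = R"
  using assms by simp

lemma D_limit:
  fixes g C :: "'a::real_normed_vector \<Rightarrow> 'b::real_normed_vector"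
  assumes conv: "\<forall>x. (\<lambda>n. c n *\<^sub>R g (r n *\<^sub>R x)) \<longlonglongrightarrow> C x"
    and z: "(\<lambda>n. c n *\<^sub>R Dfun g (r n *\<^sub>R x) (r n *\<^sub>R y)) \<longlonglongrightarrow> 0"
  shows "Dfun C x y = 0"
proof -
  have l: "\<And>p. (\<lambda>n. c n *\<^sub>R g (r n *\<^sub>R p)) \<longlonglongrightarrow> C p" using conv by blast
  have "(\<lambda>n. Dfun (\<lambda>z. c n *\<^sub>R g (r n *\<^sub>R z)) x y) \<longlonglongrightarrow> Dfun C x y"
    unfolding Dfun_def by (intro tendsto_diff tendsto_add tendsto_scaleR tendsto_const l)
  then have "(\<lambda>n. c n *\<^sub>R Dfun g (r n *\<^sub>R x) (r n *\<^sub>R y)) \<longlonglongrightarrow> Dfun C x y"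
    unfolding Dfun_scale .
  from LIMSEQ_unique[OF this z] show ?thesis .
qed

lemma Dfun_g:
  fixes f :: "'a::real_normed_vector \<Rightarrow> 'b::real_normed_vector"
  shows "Dfun (\<lambda>z. f (2 *\<^sub>R z) - 2 *\<^sub>R f z) a b = Dfun f (2 *\<^sub>R a) (2 *\<^sub>R b) - 2 *\<^sub>R Dfun f a b"
proof -
  have e: "2 *\<^sub>R (a + 3 *\<^sub>R b) = 2 *\<^sub>R a + 3 *\<^sub>R (2 *\<^sub>R b)"
    "2 *\<^sub>R (3 *\<^sub>R a + b) = 3 *\<^sub>R (2 *\<^sub>R a) + 2 *\<^sub>R b"
    "2 *\<^sub>R (a + b) = 2 *\<^sub>R a + 2 *\<^sub>R b"
    "2 *\<^sub>R (a - b) = 2 *\<^sub>R a - 2 *\<^sub>R b"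
    by (simp_all add: scaleR_right_distrib scaleR_right_diff_distrib)
  show ?thesis unfolding Dfun_def e by norm
qed

lemma master:
  fixes f :: "'a::real_normed_vector \<Rightarrow> 'b::banach" and \<phi> :: "'a \<Rightarrow> 'a \<Rightarrow> real"
    and c r :: "nat \<Rightarrow> real" and B :: "'a \<Rightarrow> real" and C :: "'a \<Rightarrow> 'b"
  assumes odd: "\<forall>x. f (- x) = - f x"
    and approx: "\<forall>x y. norm (Dfun f x y) \<le> \<phi> x y"
    and conv: "\<forall>x. (\<lambda>n. c n *\<^sub>R (f (2 *\<^sub>R (r n *\<^sub>R x)) - 2 *\<^sub>R f (r n *\<^sub>R x))) \<longlonglongrightarrow> C x"
    and lim0: "\<forall>x y. (\<lambda>n. c n * \<phi> (r n *\<^sub>R x) (r n *\<^sub>R y)) \<longlonglongrightarrow> 0"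
    and cnn: "\<forall>n. c n \<ge> 0"
    and hom: "\<forall>x. C (2 *\<^sub>R x) = 8 *\<^sub>R C x"
    and scal: "\<forall>F::'a\<Rightarrow>'b. (\<forall>x. F (2 *\<^sub>R x) = 8 *\<^sub>R F x) \<longrightarrow> (\<forall>n x. F x = c n *\<^sub>R F (r n *\<^sub>R x))"
    and tail: "\<forall>x. (\<lambda>n. c n * B (r n *\<^sub>R x)) \<longlonglongrightarrow> 0"
    and bound: "\<forall>x. norm (f (2 *\<^sub>R x) - 2 *\<^sub>R f x - C x) \<le> B x"
  shows "cubic C
   \<and> (\<forall>x y. 3 *\<^sub>R C (x + 3 *\<^sub>R y) - C (3 *\<^sub>R x + y)
         = 12 *\<^sub>R (C (x + y) + C (x - y)) - 16 *\<^sub>R (C x + C y)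
           + 12 *\<^sub>R C (2 *\<^sub>R y) - 4 *\<^sub>R C (2 *\<^sub>R x))
   \<and> (\<forall>C' :: 'a \<Rightarrow> 'b. cubic C'
        \<and> (\<forall>x y. 3 *\<^sub>R C' (x + 3 *\<^sub>R y) - C' (3 *\<^sub>R x + y)
             = 12 *\<^sub>R (C' (x + y) + C' (x - y)) - 16 *\<^sub>R (C' x + C' y)
               + 12 *\<^sub>R C' (2 *\<^sub>R y) - 4 *\<^sub>R C' (2 *\<^sub>R x))
        \<and> (\<forall>x. norm (f (2 *\<^sub>R x) - 2 *\<^sub>R f x - C' x) \<le> B x)
        \<longrightarrow> C' = C)"
proof -
  define g where "g z = f (2 *\<^sub>R z) - 2 *\<^sub>R f z" for z
  have conv': "\<forall>x. (\<lambda>n. c n *\<^sub>R g (r n *\<^sub>R x)) \<longlonglongrightarrow> C x" using conv unfolding g_def .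
  have godd: "g (- z) = - g z" for z
  proof -
    have "2 *\<^sub>R (- z) = - (2 *\<^sub>R z)" by simp
    then show ?thesis unfolding g_def using odd by simp
  qed
  have Codd: "\<forall>x. C (- x) = - C x"
  proof
    fix x
    have "(\<lambda>n. c n *\<^sub>R g (r n *\<^sub>R (- x))) \<longlonglongrightarrow> C (- x)" using conv' by blast
    moreover have "(\<lambda>n. c n *\<^sub>R g (r n *\<^sub>R (- x))) = (\<lambda>n. - (c n *\<^sub>R g (r n *\<^sub>R x)))"
      using godd by simp
    moreover have "(\<lambda>n. - (c n *\<^sub>R g (r n *\<^sub>R x))) \<longlonglongrightarrow> - C x"
      using conv' by (intro tendsto_minus) blast
    ultimately show "C (- x) = - C x" using LIMSEQ_unique by metis
  qed
  have CD: "\<forall>x y. Dfun C x y = 0"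
  proof (intro allI)
    fix x y
    show "Dfun C x y = 0"
    proof (rule D_limit[OF conv'])
      show "(\<lambda>n. c n *\<^sub>R Dfun g (r n *\<^sub>R x) (r n *\<^sub>R y)) \<longlonglongrightarrow> 0"
      proof (rule Lim_null_comparison)
        have s2: "2 *\<^sub>R (r n *\<^sub>R p) = r n *\<^sub>R (2 *\<^sub>R p)" for n and p :: 'a by simp
        show "\<forall>\<^sub>F n in sequentially. norm (c n *\<^sub>R Dfun g (r n *\<^sub>R x) (r n *\<^sub>R y))
               \<le> c n * \<phi> (r n *\<^sub>R (2 *\<^sub>R x)) (r n *\<^sub>R (2 *\<^sub>R y)) + 2 * (c n * \<phi> (r n *\<^sub>R x) (r n *\<^sub>R y))"
        proof (rule always_eventually, intro allI)
          fix n
          have "norm (Dfun g (r n *\<^sub>R x) (r n *\<^sub>R y))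
              \<le> norm (Dfun f (2 *\<^sub>R (r n *\<^sub>R x)) (2 *\<^sub>R (r n *\<^sub>R y))) + norm (2 *\<^sub>R Dfun f (r n *\<^sub>R x) (r n *\<^sub>R y))"
            unfolding g_def Dfun_g by (rule norm_triangle_ineq4)
          also have "\<dots> \<le> \<phi> (r n *\<^sub>R (2 *\<^sub>R x)) (r n *\<^sub>R (2 *\<^sub>R y)) + 2 * \<phi> (r n *\<^sub>R x) (r n *\<^sub>R y)"
            using approx unfolding s2 by (intro add_mono) auto
          finally have "norm (Dfun g (r n *\<^sub>R x) (r n *\<^sub>R y)) \<le> \<dots>" .
          then have "c n * norm (Dfun g (r n *\<^sub>R x) (r n *\<^sub>R y)) \<le> c n * (\<phi> (r n *\<^sub>R (2 *\<^sub>R x)) (r n *\<^sub>R (2 *\<^sub>R y)) + 2 * \<phi> (r n *\<^sub>R x) (r n *\<^sub>R y))"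
            using cnn by (intro mult_left_mono) auto
          then show "norm (c n *\<^sub>R Dfun g (r n *\<^sub>R x) (r n *\<^sub>R y))
               \<le> c n * \<phi> (r n *\<^sub>R (2 *\<^sub>R x)) (r n *\<^sub>R (2 *\<^sub>R y)) + 2 * (c n * \<phi> (r n *\<^sub>R x) (r n *\<^sub>R y))"
            using cnn by (simp add: algebra_simps)
        qed
        show "(\<lambda>n. c n * \<phi> (r n *\<^sub>R (2 *\<^sub>R x)) (r n *\<^sub>R (2 *\<^sub>R y)) + 2 * (c n * \<phi> (r n *\<^sub>R x) (r n *\<^sub>R y))) \<longlonglongrightarrow> 0"
          using tendsto_add[OF lim0[rule_format, of "2 *\<^sub>R x" "2 *\<^sub>R y"] tendsto_mult[OF tendsto_const[of 2] lim0[rule_format, of x y]]]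
          by simp
      qed
    qed
  qed
  have Dform: "\<forall>x y. 3 *\<^sub>R F (x + 3 *\<^sub>R y) - F (3 *\<^sub>R x + y)
         = 12 *\<^sub>R (F (x + y) + F (x - y)) - 16 *\<^sub>R (F x + F y)
           + 12 *\<^sub>R F (2 *\<^sub>R y) - 4 *\<^sub>R F (2 *\<^sub>R x)" if "\<forall>x y. Dfun F x y = 0" for F :: "'a \<Rightarrow> 'b"
  proof (intro allI)
    fix x y
    have h: "Dfun F x y = 0" using that by blast
    show "3 *\<^sub>R F (x + 3 *\<^sub>R y) - F (3 *\<^sub>R x + y)
         = 12 *\<^sub>R (F (x + y) + F (x - y)) - 16 *\<^sub>R (F x + F y)
           + 12 *\<^sub>R F (2 *\<^sub>R y) - 4 *\<^sub>R F (2 *\<^sub>R x)"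
      by (rule lincomb1[OF h, where a=1]) (unfold Dfun_def, norm)
  qed
  have cub: "cubic C" by (rule cubic_of_D[OF CD Codd hom])
  have uniq: "C' = C" if cC': "cubic C'" and bC': "\<forall>x. norm (f (2 *\<^sub>R x) - 2 *\<^sub>R f x - C' x) \<le> B x"
    for C' :: "'a \<Rightarrow> 'b"
  proof
    fix x
    have hom': "\<forall>x. C' (2 *\<^sub>R x) = 8 *\<^sub>R C' x" using cubic_hom[OF cC'] by blast
    have le: "norm (C' x - C x) \<le> 2 * (c n * B (r n *\<^sub>R x))" for n
    proof -
      define y where "y = r n *\<^sub>R x"
      have "C' x - C x = c n *\<^sub>R (C' y - C y)"
        using scal hom' hom unfolding y_def by (metis scaleR_right_diff_distrib)
      then have "norm (C' x - C x) = c n * norm (C' y - C y)" using cnn by simp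
      also have "norm (C' y - C y) \<le> norm (g y - C y) + norm (g y - C' y)"
      proof -
        have "C' y - C y = (g y - C y) - (g y - C' y)" by simp
        then show ?thesis by (metis norm_triangle_ineq4)
      qed
      also have "\<dots> \<le> B y + B y" using bound bC' unfolding g_def by (intro add_mono) auto
      finally have "norm (C' x - C x) \<le> c n * (B y + B y)" using cnn by (simp add: mult_left_mono)
      then show ?thesis unfolding y_def by simp
    qed
    have "(\<lambda>n. 2 * (c n * B (r n *\<^sub>R x))) \<longlonglongrightarrow> 2 * 0"
      using tail by (intro tendsto_mult tendsto_const) blast
    then have "(\<lambda>n. 2 * (c n * B (r n *\<^sub>R x))) \<longlonglongrightarrow> 0" by simp
    then have "norm (C' x - C x) \<le> 0"
      by (rule LIMSEQ_le_const) (use le in blast)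
    then show "C' x = C x" by simp
  qed
  show ?thesis using cub Dform[OF CD] uniq by blast
qed



lemma gkey:
  fixes f :: "'a::real_normed_vector \<Rightarrow> 'b::real_normed_vector"
  assumes odd: "\<forall>x. f (- x) = - f x"
    and approx: "\<forall>x y. norm (Dfun f x y) \<le> \<phi> x y"
  shows "norm ((f (2 *\<^sub>R (2 *\<^sub>R z)) - 2 *\<^sub>R f (2 *\<^sub>R z)) - 8 *\<^sub>R (f (2 *\<^sub>R z) - 2 *\<^sub>R f z)) \<le> \<phi> z z / 2"
proof -
  have h0: "f 0 = - f 0" using odd[rule_format, of 0] by simp
  have "2 *\<^sub>R f 0 = f 0 + - f 0" unfolding scaleR_2 using h0 by simp
  then have "2 *\<^sub>R f 0 = 0" by simp
  then have f0: "f 0 = 0" by simp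
  have e: "2 *\<^sub>R (2 *\<^sub>R z) = 4 *\<^sub>R z" by simp
  have "(f (2 *\<^sub>R (2 *\<^sub>R z)) - 2 *\<^sub>R f (2 *\<^sub>R z)) - 8 *\<^sub>R (f (2 *\<^sub>R z) - 2 *\<^sub>R f z)
     = (1/2) *\<^sub>R Dfun f z z" unfolding keyD[of f, OF f0] e by norm
  then have "norm ((f (2 *\<^sub>R (2 *\<^sub>R z)) - 2 *\<^sub>R f (2 *\<^sub>R z)) - 8 *\<^sub>R (f (2 *\<^sub>R z) - 2 *\<^sub>R f z))
     = norm (Dfun f z z) / 2" by simp
  also have "\<dots> \<le> \<phi> z z / 2" using approx by simp
  finally show ?thesis .
qed

lemma case_pos:
  fixes f :: "'a::real_normed_vector \<Rightarrow> 'b::banach" and \<phi> :: "'a \<Rightarrow> 'a \<Rightarrow> real"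
  assumes odd: "\<forall>x. f (- x) = - f x"
    and approx: "\<forall>x y. norm (Dfun f x y) \<le> \<phi> x y"
    and summ: "\<forall>x. summable (\<lambda>i. (8::real) ^ (i + 1) * \<phi> (inverse ((2::real) ^ (i + 1)) *\<^sub>R x) (inverse ((2::real) ^ (i + 1)) *\<^sub>R x))"
  shows "\<exists>C. (\<forall>x. (\<lambda>n. (8::real) ^ n *\<^sub>R (f (2 *\<^sub>R (inverse ((2::real) ^ n) *\<^sub>R x)) - 2 *\<^sub>R f (inverse ((2::real) ^ n) *\<^sub>R x))) \<longlonglongrightarrow> C x)
     \<and> (\<forall>x. norm (f (2 *\<^sub>R x) - 2 *\<^sub>R f x - C x) \<le> 1/2 * (\<Sum>j. (8::real) ^ j * \<phi> (inverse ((2::real) ^ (j+1)) *\<^sub>R x) (inverse ((2::real) ^ (j+1)) *\<^sub>R x)))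
     \<and> (\<forall>x. C (2 *\<^sub>R x) = 8 *\<^sub>R C x)
     \<and> (\<forall>x. (\<lambda>n. (8::real) ^ n * (1/2 * (\<Sum>j. (8::real) ^ j * \<phi> (inverse ((2::real) ^ (j+1)) *\<^sub>R (inverse ((2::real) ^ n) *\<^sub>R x)) (inverse ((2::real) ^ (j+1)) *\<^sub>R (inverse ((2::real) ^ n) *\<^sub>R x))))) \<longlonglongrightarrow> 0)"
proof -
  define g where "g z = f (2 *\<^sub>R z) - 2 *\<^sub>R f z" for z
  have gk: "norm (g (2 *\<^sub>R z) - 8 *\<^sub>R g z) \<le> \<phi> z z / 2" for z
    unfolding g_def using gkey[OF odd approx] .
  define a where "a x n = (8::real) ^ n *\<^sub>R g (inverse ((2::real) ^ n) *\<^sub>R x)" for x n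
  define u where "u x i = (8::real) ^ i * \<phi> (inverse ((2::real) ^ (i + 1)) *\<^sub>R x) (inverse ((2::real) ^ (i + 1)) *\<^sub>R x)" for x i
  have su: "summable (u x)" for x
  proof -
    have "summable (\<lambda>i. (1/8) * ((8::real) ^ (i + 1) * \<phi> (inverse ((2::real) ^ (i + 1)) *\<^sub>R x) (inverse ((2::real) ^ (i + 1)) *\<^sub>R x)))"
      using summ by (intro summable_mult) blast
    moreover have "(\<lambda>i. (1/8) * ((8::real) ^ (i + 1) * \<phi> (inverse ((2::real) ^ (i + 1)) *\<^sub>R x) (inverse ((2::real) ^ (i + 1)) *\<^sub>R x))) = u x"
      unfolding u_def by (rule ext) simp
    ultimately show ?thesis by simp
  qed
  have step: "norm (a x (Suc n) - a x n) \<le> 1/2 * u x n" for x n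
  proof -
    define z where "z = inverse ((2::real) ^ (Suc n)) *\<^sub>R x"
    have z2: "inverse ((2::real) ^ n) *\<^sub>R x = 2 *\<^sub>R z" unfolding z_def by simp
    have "a x (Suc n) - a x n = (8::real) ^ n *\<^sub>R (8 *\<^sub>R g z - g (2 *\<^sub>R z))"
      unfolding a_def z2 unfolding z_def by (simp add: scaleR_right_diff_distrib)
    then have "norm (a x (Suc n) - a x n) = 8 ^ n * norm (g (2 *\<^sub>R z) - 8 *\<^sub>R g z)"
      by (simp add: norm_minus_commute)
    also have "\<dots> \<le> 8 ^ n * (\<phi> z z / 2)" using gk by (intro mult_left_mono) auto
    finally show ?thesis unfolding u_def z_def by simp
  qed
  have ex: "\<exists>L. a x \<longlonglongrightarrow> L \<and> norm (a x 0 - L) \<le> (\<Sum>n. 1/2 * u x n)" for x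
    by (rule cauchy_core) (use su step in auto)
  define C where "C x = lim (a x)" for x
  have conv: "a x \<longlonglongrightarrow> C x" for x
    using ex[of x] unfolding C_def by (metis limI)
  have bnd: "norm (g x - C x) \<le> 1/2 * (\<Sum>j. u x j)" for x
  proof -
    obtain L where "a x \<longlonglongrightarrow> L" "norm (a x 0 - L) \<le> (\<Sum>n. 1/2 * u x n)" using ex by blast
    moreover have "L = C x" using LIMSEQ_unique[OF \<open>a x \<longlonglongrightarrow> L\<close> conv] .
    moreover have "a x 0 = g x" unfolding a_def by simp
    moreover have "(\<Sum>n. 1/2 * u x n) = 1/2 * (\<Sum>j. u x j)" by (rule suminf_mult[OF su])
    ultimately show ?thesis by simp
  qed
  have hom: "C (2 *\<^sub>R x) = 8 *\<^sub>R C x" for x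
  proof -
    have "(\<lambda>n. a (2 *\<^sub>R x) (Suc n)) \<longlonglongrightarrow> C (2 *\<^sub>R x)" using conv by (rule LIMSEQ_Suc)
    moreover have "(\<lambda>n. a (2 *\<^sub>R x) (Suc n)) = (\<lambda>n. 8 *\<^sub>R a x n)"
    proof
      fix n
      have "inverse ((2::real) ^ Suc n) *\<^sub>R (2 *\<^sub>R x) = inverse ((2::real) ^ n) *\<^sub>R x" by simp
      then show "a (2 *\<^sub>R x) (Suc n) = 8 *\<^sub>R a x n" unfolding a_def by simp
    qed
    moreover have "(\<lambda>n. 8 *\<^sub>R a x n) \<longlonglongrightarrow> 8 *\<^sub>R C x" using conv by (intro tendsto_intros)
    ultimately show ?thesis using LIMSEQ_unique by metis
  qed
  have tail: "(\<lambda>n. (8::real) ^ n * (1/2 * (\<Sum>j. (8::real) ^ j * \<phi> (inverse ((2::real) ^ (j+1)) *\<^sub>R (inverse ((2::real) ^ n) *\<^sub>R x)) (inverse ((2::real) ^ (j+1)) *\<^sub>R (inverse ((2::real) ^ n) *\<^sub>R x))))) \<longlonglongrightarrow> 0" for x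
  proof -
    have eq: "(8::real) ^ n * (1/2 * (\<Sum>j. (8::real) ^ j * \<phi> (inverse ((2::real) ^ (j+1)) *\<^sub>R (inverse ((2::real) ^ n) *\<^sub>R x)) (inverse ((2::real) ^ (j+1)) *\<^sub>R (inverse ((2::real) ^ n) *\<^sub>R x))))
       = 1/2 * (\<Sum>j. u x (j + n))" for n
    proof -
      define v where "v j = (8::real) ^ j * \<phi> (inverse ((2::real) ^ (j+1)) *\<^sub>R (inverse ((2::real) ^ n) *\<^sub>R x)) (inverse ((2::real) ^ (j+1)) *\<^sub>R (inverse ((2::real) ^ n) *\<^sub>R x))" for j
      have uv: "(\<lambda>j. u x (j + n)) = (\<lambda>j. 8 ^ n * v j)"
      proof
        fix j
        have "inverse ((2::real) ^ (j+1)) *\<^sub>R (inverse ((2::real) ^ n) *\<^sub>R x) = inverse ((2::real) ^ (j + n + 1)) *\<^sub>R x"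
          by (simp add: power_add)
        then show "u x (j + n) = 8 ^ n * v j" unfolding u_def v_def by (simp add: power_add)
      qed
      have "summable (\<lambda>j. u x (j + n))" using su by (rule summable_ignore_initial_segment)
      then have "summable (\<lambda>j. (8::real) ^ n * v j)" unfolding uv .
      then have sv: "summable v" by (simp add: summable_cmult_iff)
      show ?thesis unfolding v_def[symmetric] uv suminf_mult[OF sv] by simp
    qed
    have "(\<lambda>n. 1/2 * (\<Sum>j. u x (j + n))) \<longlonglongrightarrow> 1/2 * 0"
      by (intro tendsto_mult tendsto_const tail_zero su)
    then show ?thesis unfolding eq by simp
  qed
  show ?thesis
    apply (rule exI[of _ C])
    using conv bnd hom tail unfolding a_def g_def u_def by blast
qed



lemma case_neg:
  fixes f :: "'a::real_normed_vector \<Rightarrow> 'b::banach" and \<phi> :: "'a \<Rightarrow> 'a \<Rightarrow> real"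
  assumes odd: "\<forall>x. f (- x) = - f x"
    and approx: "\<forall>x y. norm (Dfun f x y) \<le> \<phi> x y"
    and summ: "\<forall>x. summable (\<lambda>i. inverse ((8::real) ^ (i + 1)) * \<phi> (((2::real) ^ (i + 1)) *\<^sub>R x) (((2::real) ^ (i + 1)) *\<^sub>R x))"
  shows "\<exists>C. (\<forall>x. (\<lambda>n. inverse ((8::real) ^ n) *\<^sub>R (f (2 *\<^sub>R (((2::real) ^ n) *\<^sub>R x)) - 2 *\<^sub>R f (((2::real) ^ n) *\<^sub>R x))) \<longlonglongrightarrow> C x)
     \<and> (\<forall>x. norm (f (2 *\<^sub>R x) - 2 *\<^sub>R f x - C x) \<le> 1/2 * (\<Sum>j. inverse ((8::real) ^ (j+1)) * \<phi> (((2::real) ^ j) *\<^sub>R x) (((2::real) ^ j) *\<^sub>R x)))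
     \<and> (\<forall>x. C (2 *\<^sub>R x) = 8 *\<^sub>R C x)
     \<and> (\<forall>x. (\<lambda>n. inverse ((8::real) ^ n) * (1/2 * (\<Sum>j. inverse ((8::real) ^ (j+1)) * \<phi> (((2::real) ^ j) *\<^sub>R (((2::real) ^ n) *\<^sub>R x)) (((2::real) ^ j) *\<^sub>R (((2::real) ^ n) *\<^sub>R x))))) \<longlonglongrightarrow> 0)"
proof -
  define g where "g z = f (2 *\<^sub>R z) - 2 *\<^sub>R f z" for z
  have gk: "norm (g (2 *\<^sub>R z) - 8 *\<^sub>R g z) \<le> \<phi> z z / 2" for z
    unfolding g_def using gkey[OF odd approx] .
  define a where "a x n = inverse ((8::real) ^ n) *\<^sub>R g (((2::real) ^ n) *\<^sub>R x)" for x n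
  define u where "u x i = inverse ((8::real) ^ (i + 1)) * \<phi> (((2::real) ^ i) *\<^sub>R x) (((2::real) ^ i) *\<^sub>R x)" for x i
  have su: "summable (u x)" for x
  proof -
    have "summable (\<lambda>i. (1/8) * (inverse ((8::real) ^ (i + 1)) * \<phi> (((2::real) ^ (i + 1)) *\<^sub>R x) (((2::real) ^ (i + 1)) *\<^sub>R x)))"
      using summ by (intro summable_mult) blast
    moreover have "(\<lambda>i. (1/8) * (inverse ((8::real) ^ (i + 1)) * \<phi> (((2::real) ^ (i + 1)) *\<^sub>R x) (((2::real) ^ (i + 1)) *\<^sub>R x))) = (\<lambda>i. u x (Suc i))"
      unfolding u_def by (rule ext) (simp add: field_simps)
    ultimately have "summable (\<lambda>i. u x (Suc i))" by metis
    then show ?thesis by (simp add: summable_Suc_iff)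
  qed
  have step: "norm (a x (Suc n) - a x n) \<le> 1/2 * u x n" for x n
  proof -
    define w where "w = ((2::real) ^ n) *\<^sub>R x"
    have w2: "((2::real) ^ Suc n) *\<^sub>R x = 2 *\<^sub>R w" unfolding w_def by simp
    have i8: "inverse ((8::real) ^ n) = inverse ((8::real) ^ Suc n) * 8" by simp
    have "a x (Suc n) - a x n = inverse ((8::real) ^ Suc n) *\<^sub>R (g (2 *\<^sub>R w) - 8 *\<^sub>R g w)"
      unfolding a_def w2 i8 unfolding w_def by (simp add: scaleR_right_diff_distrib)
    then have "norm (a x (Suc n) - a x n) = inverse (8 ^ Suc n) * norm (g (2 *\<^sub>R w) - 8 *\<^sub>R g w)"
      by simp
    also have "\<dots> \<le> inverse (8 ^ Suc n) * (\<phi> w w / 2)" using gk by (intro mult_left_mono) auto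
    finally show ?thesis unfolding u_def w_def by simp
  qed
  have ex: "\<exists>L. a x \<longlonglongrightarrow> L \<and> norm (a x 0 - L) \<le> (\<Sum>n. 1/2 * u x n)" for x
    by (rule cauchy_core) (use su step in auto)
  define C where "C x = lim (a x)" for x
  have conv: "a x \<longlonglongrightarrow> C x" for x
    using ex[of x] unfolding C_def by (metis limI)
  have bnd: "norm (g x - C x) \<le> 1/2 * (\<Sum>j. u x j)" for x
  proof -
    obtain L where "a x \<longlonglongrightarrow> L" "norm (a x 0 - L) \<le> (\<Sum>n. 1/2 * u x n)" using ex by blast
    moreover have "L = C x" using LIMSEQ_unique[OF \<open>a x \<longlonglongrightarrow> L\<close> conv] .
    moreover have "a x 0 = g x" unfolding a_def by simp
    moreover have "(\<Sum>n. 1/2 * u x n) = 1/2 * (\<Sum>j. u x j)" by (rule suminf_mult[OF su])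
    ultimately show ?thesis by simp
  qed
  have hom: "C (2 *\<^sub>R x) = 8 *\<^sub>R C x" for x
  proof -
    have "(\<lambda>n. a x (Suc n)) \<longlonglongrightarrow> C x" using conv by (rule LIMSEQ_Suc)
    then have "(\<lambda>n. 8 *\<^sub>R a x (Suc n)) \<longlonglongrightarrow> 8 *\<^sub>R C x" by (intro tendsto_intros)
    moreover have "(\<lambda>n. 8 *\<^sub>R a x (Suc n)) = a (2 *\<^sub>R x)"
    proof
      fix n
      have "((2::real) ^ n) *\<^sub>R (2 *\<^sub>R x) = ((2::real) ^ Suc n) *\<^sub>R x" by (simp add: mult.commute)
      moreover have "8 * inverse ((8::real) ^ Suc n) = inverse (8 ^ n)" by simp
      ultimately show "8 *\<^sub>R a x (Suc n) = a (2 *\<^sub>R x) n" unfolding a_def by (simp add: mult.commute)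
    qed
    ultimately show ?thesis using conv[of "2 *\<^sub>R x"] LIMSEQ_unique by metis
  qed
  have tail: "(\<lambda>n. inverse ((8::real) ^ n) * (1/2 * (\<Sum>j. inverse ((8::real) ^ (j+1)) * \<phi> (((2::real) ^ j) *\<^sub>R (((2::real) ^ n) *\<^sub>R x)) (((2::real) ^ j) *\<^sub>R (((2::real) ^ n) *\<^sub>R x))))) \<longlonglongrightarrow> 0" for x
  proof -
    have eq: "inverse ((8::real) ^ n) * (1/2 * (\<Sum>j. inverse ((8::real) ^ (j+1)) * \<phi> (((2::real) ^ j) *\<^sub>R (((2::real) ^ n) *\<^sub>R x)) (((2::real) ^ j) *\<^sub>R (((2::real) ^ n) *\<^sub>R x))))
       = 1/2 * (\<Sum>j. u x (j + n))" for n
    proof -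
      define v where "v j = inverse ((8::real) ^ (j+1)) * \<phi> (((2::real) ^ j) *\<^sub>R (((2::real) ^ n) *\<^sub>R x)) (((2::real) ^ j) *\<^sub>R (((2::real) ^ n) *\<^sub>R x))" for j
      have uv: "(\<lambda>j. u x (j + n)) = (\<lambda>j. inverse (8 ^ n) * v j)"
      proof
        fix j
        have "((2::real) ^ j) *\<^sub>R (((2::real) ^ n) *\<^sub>R x) = ((2::real) ^ (j + n)) *\<^sub>R x"
          by (simp add: power_add)
        moreover have "inverse ((8::real) ^ (j + n + 1)) = inverse (8 ^ n) * inverse (8 ^ (j + 1))"
          by (simp add: power_add)
        ultimately show "u x (j + n) = inverse (8 ^ n) * v j" unfolding u_def v_def by (simp add: power_add)
      qed
      have "summable (\<lambda>j. u x (j + n))" using su by (rule summable_ignore_initial_segment)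
      then have "summable (\<lambda>j. inverse ((8::real) ^ n) * v j)" unfolding uv .
      then have sv: "summable v" by (simp add: summable_cmult_iff)
      show ?thesis unfolding v_def[symmetric] uv suminf_mult[OF sv] by simp
    qed
    have "(\<lambda>n. 1/2 * (\<Sum>j. u x (j + n))) \<longlonglongrightarrow> 1/2 * 0"
      by (intro tendsto_mult tendsto_const tail_zero su)
    then show ?thesis unfolding eq by simp
  qed
  show ?thesis
    apply (rule exI[of _ C])
    using conv bnd hom tail unfolding a_def g_def u_def by blast
qed



theorem theorem3p2:
  fixes f :: "'a::real_normed_vector \<Rightarrow> 'b::banach"
    and \<phi> :: "'a \<Rightarrow> 'a \<Rightarrow> real"
    and l :: int
  assumes l: "l \<in> {-1, 1}"
    and odd: "\<forall>x. f (- x) = - f x"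
    and phi_nonneg: "\<forall>x y. \<phi> x y \<ge> 0"
    and approx: "\<forall>x y. norm (Dfun f x y) \<le> \<phi> x y"
    and summ: "\<forall>x. summable (\<lambda>i::nat. (8::real) powi (int (i + 1) * l) *
                 \<phi> (inverse ((2::real) powi (int (i + 1) * l)) *\<^sub>R x)
                   (inverse ((2::real) powi (int (i + 1) * l)) *\<^sub>R x))"
    and lim0: "\<forall>x y. (\<lambda>n::nat. (8::real) powi (l * int n) *
                 \<phi> (inverse ((2::real) powi (l * int n)) *\<^sub>R x)
                   (inverse ((2::real) powi (l * int n)) *\<^sub>R y)) \<longlonglongrightarrow> 0"
  shows "\<exists>C :: 'a \<Rightarrow> 'b.
     (\<forall>x. (\<lambda>n::nat. (8::real) powi (l * int n) *\<^sub>R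
            (f (inverse ((2::real) powi (l * (int n - l))) *\<^sub>R x)
             - 2 *\<^sub>R f (inverse ((2::real) powi (l * int n)) *\<^sub>R x))) \<longlonglongrightarrow> C x)
   \<and> cubic C
   \<and> (\<forall>x y. 3 *\<^sub>R C (x + 3 *\<^sub>R y) - C (3 *\<^sub>R x + y)
         = 12 *\<^sub>R (C (x + y) + C (x - y)) - 16 *\<^sub>R (C x + C y)
           + 12 *\<^sub>R C (2 *\<^sub>R y) - 4 *\<^sub>R C (2 *\<^sub>R x))
   \<and> (\<forall>x. norm (f (2 *\<^sub>R x) - 2 *\<^sub>R f x - C x)
         \<le> 1/2 * (\<Sum>j. (let i = j + nat (\<bar>l - 1\<bar> div 2) in
              (8::real) powi (int i * l) *
              \<phi> (inverse ((2::real) powi (l * (int i + l))) *\<^sub>R x)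
                (inverse ((2::real) powi (l * (int i + l))) *\<^sub>R x))))
   \<and> (\<forall>C' :: 'a \<Rightarrow> 'b. cubic C'
        \<and> (\<forall>x y. 3 *\<^sub>R C' (x + 3 *\<^sub>R y) - C' (3 *\<^sub>R x + y)
             = 12 *\<^sub>R (C' (x + y) + C' (x - y)) - 16 *\<^sub>R (C' x + C' y)
               + 12 *\<^sub>R C' (2 *\<^sub>R y) - 4 *\<^sub>R C' (2 *\<^sub>R x))
        \<and> (\<forall>x. norm (f (2 *\<^sub>R x) - 2 *\<^sub>R f x - C' x)
             \<le> 1/2 * (\<Sum>j. (let i = j + nat (\<bar>l - 1\<bar> div 2) in
                  (8::real) powi (int i * l) *
                  \<phi> (inverse ((2::real) powi (l * (int i + l))) *\<^sub>R x)
                    (inverse ((2::real) powi (l * (int i + l))) *\<^sub>R x))))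
        \<longrightarrow> C' = C)"
proof -
  define c where "c n = (8::real) powi (l * int n)" for n :: nat
  define r where "r n = inverse ((2::real) powi (l * int n))" for n :: nat
  define B where "B x = 1/2 * (\<Sum>j. (let i = j + nat (\<bar>l - 1\<bar> div 2) in
              (8::real) powi (int i * l) *
              \<phi> (inverse ((2::real) powi (l * (int i + l))) *\<^sub>R x)
                (inverse ((2::real) powi (l * (int i + l))) *\<^sub>R x)))" for x
  have cnn: "\<forall>n. c n \<ge> 0" unfolding c_def by simp
  have lim0': "\<forall>x y. (\<lambda>n. c n * \<phi> (r n *\<^sub>R x) (r n *\<^sub>R y)) \<longlonglongrightarrow> 0"
    using lim0 unfolding c_def r_def by blast
  have main: "\<exists>C. (\<forall>x. (\<lambda>n::nat. (8::real) powi (l * int n) *\<^sub>R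
            (f (inverse ((2::real) powi (l * (int n - l))) *\<^sub>R x)
             - 2 *\<^sub>R f (inverse ((2::real) powi (l * int n)) *\<^sub>R x))) \<longlonglongrightarrow> C x)
     \<and> (\<forall>x. (\<lambda>n. c n *\<^sub>R (f (2 *\<^sub>R (r n *\<^sub>R x)) - 2 *\<^sub>R f (r n *\<^sub>R x))) \<longlonglongrightarrow> C x)
     \<and> (\<forall>x. C (2 *\<^sub>R x) = 8 *\<^sub>R C x)
     \<and> (\<forall>x. (\<lambda>n. c n * B (r n *\<^sub>R x)) \<longlonglongrightarrow> 0)
     \<and> (\<forall>x. norm (f (2 *\<^sub>R x) - 2 *\<^sub>R f x - C x) \<le> B x)" (is ?T1)
   and scal: "\<forall>F::'a\<Rightarrow>'b. (\<forall>x. F (2 *\<^sub>R x) = 8 *\<^sub>R F x) \<longrightarrow> (\<forall>n x. F x = c n *\<^sub>R F (r n *\<^sub>R x))" (is ?T2)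
  proof -
    from l have "l = 1 \<or> l = -1" by auto
    then have "?T1 \<and> ?T2"
    proof
      assume l1: "l = 1"
      have cE: "c = (\<lambda>n. 8 ^ n)" unfolding c_def l1 by (rule ext) simp
      have rE: "r = (\<lambda>n. inverse (2 ^ n))" unfolding r_def l1 by (rule ext) simp
      have BE: "B = (\<lambda>x. 1/2 * (\<Sum>j. (8::real) ^ j * \<phi> (inverse ((2::real) ^ (j+1)) *\<^sub>R x) (inverse ((2::real) ^ (j+1)) *\<^sub>R x)))"
      proof (rule ext)
        fix x
        have e1: "(8::real) powi (int j * 1) = 8 ^ j" for j by simp
        have e2: "inverse ((2::real) powi (1 * (int j + 1))) = inverse (2 ^ (j+1))" for j
          by (metis mult_1 of_nat_Suc power_int_of_nat Suc_eq_plus1 add.commute)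
        show "B x = 1/2 * (\<Sum>j. (8::real) ^ j * \<phi> (inverse ((2::real) ^ (j+1)) *\<^sub>R x) (inverse ((2::real) ^ (j+1)) *\<^sub>R x))"
          unfolding B_def l1 Let_def by (simp only: e1 e2 diff_self abs_zero div_0 nat_0 add_0_right)
      qed
      have summ': "\<forall>x. summable (\<lambda>i. (8::real) ^ (i + 1) * \<phi> (inverse ((2::real) ^ (i + 1)) *\<^sub>R x) (inverse ((2::real) ^ (i + 1)) *\<^sub>R x))"
      proof -
        have e: "(8::real) powi (int (i+1) * 1) = 8 ^ (i+1)" "(2::real) powi (int (i+1) * 1) = 2 ^ (i+1)" for i
          by (simp only: mult_1_right power_int_of_nat)+
        show ?thesis using summ unfolding l1 e .
      qed
      have sE: "(\<lambda>n::nat. (8::real) powi (l * int n) *\<^sub>R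
            (f (inverse ((2::real) powi (l * (int n - l))) *\<^sub>R x)
             - 2 *\<^sub>R f (inverse ((2::real) powi (l * int n)) *\<^sub>R x)))
          = (\<lambda>n. (8::real) ^ n *\<^sub>R (f (2 *\<^sub>R (inverse ((2::real) ^ n) *\<^sub>R x)) - 2 *\<^sub>R f (inverse ((2::real) ^ n) *\<^sub>R x)))" for x
      proof (rule ext)
        fix n
        have a: "inverse ((2::real) powi (1 * (int n - 1))) = 2 * inverse (2 ^ n)"
        proof -
          have h: "(2::real) powi (int n - 1) * 2 = 2 ^ n" by (simp add: power_int_diff)
          then have "inverse ((2::real) ^ n) = inverse ((2::real) powi (int n - 1)) * inverse 2"
            by (metis inverse_mult_distrib)
          then show ?thesis by simp
        qed
        have b: "(8::real) powi (1 * int n) = 8 ^ n" by simp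
        have c: "inverse ((2::real) powi (1 * int n)) = inverse (2 ^ n)" by simp
        show "(8::real) powi (l * int n) *\<^sub>R
            (f (inverse ((2::real) powi (l * (int n - l))) *\<^sub>R x)
             - 2 *\<^sub>R f (inverse ((2::real) powi (l * int n)) *\<^sub>R x))
          = (8::real) ^ n *\<^sub>R (f (2 *\<^sub>R (inverse ((2::real) ^ n) *\<^sub>R x)) - 2 *\<^sub>R f (inverse ((2::real) ^ n) *\<^sub>R x))"
          unfolding l1 a b c by (simp only: scaleR_scaleR)
      qed
      obtain C where C: "\<forall>x. (\<lambda>n. (8::real) ^ n *\<^sub>R (f (2 *\<^sub>R (inverse ((2::real) ^ n) *\<^sub>R x)) - 2 *\<^sub>R f (inverse ((2::real) ^ n) *\<^sub>R x))) \<longlonglongrightarrow> C x"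
        "\<forall>x. norm (f (2 *\<^sub>R x) - 2 *\<^sub>R f x - C x) \<le> 1/2 * (\<Sum>j. (8::real) ^ j * \<phi> (inverse ((2::real) ^ (j+1)) *\<^sub>R x) (inverse ((2::real) ^ (j+1)) *\<^sub>R x))"
        "\<forall>x. C (2 *\<^sub>R x) = 8 *\<^sub>R C x"
        "\<forall>x. (\<lambda>n. (8::real) ^ n * (1/2 * (\<Sum>j. (8::real) ^ j * \<phi> (inverse ((2::real) ^ (j+1)) *\<^sub>R (inverse ((2::real) ^ n) *\<^sub>R x)) (inverse ((2::real) ^ (j+1)) *\<^sub>R (inverse ((2::real) ^ n) *\<^sub>R x))))) \<longlonglongrightarrow> 0"
        using case_pos[OF odd approx summ'] by blast
      have sc: "\<forall>F::'a\<Rightarrow>'b. (\<forall>x. F (2 *\<^sub>R x) = 8 *\<^sub>R F x) \<longrightarrow> (\<forall>n x. F x = c n *\<^sub>R F (r n *\<^sub>R x))"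
      proof (intro allI impI)
        fix F :: "'a \<Rightarrow> 'b" and n x
        assume h: "\<forall>x. F (2 *\<^sub>R x) = 8 *\<^sub>R F x"
        have "F ((2::real) ^ n *\<^sub>R (inverse ((2::real) ^ n) *\<^sub>R x)) = 8 ^ n *\<^sub>R F (inverse ((2::real) ^ n) *\<^sub>R x)"
          by (rule hom_pow[OF h])
        then show "F x = c n *\<^sub>R F (r n *\<^sub>R x)" unfolding cE rE by simp
      qed
      have T1: ?T1
      proof (rule exI[of _ C], intro conjI)
        show "\<forall>x. (\<lambda>n::nat. (8::real) powi (l * int n) *\<^sub>R
            (f (inverse ((2::real) powi (l * (int n - l))) *\<^sub>R x)
             - 2 *\<^sub>R f (inverse ((2::real) powi (l * int n)) *\<^sub>R x))) \<longlonglongrightarrow> C x"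
          unfolding sE by (rule C(1))
        show "\<forall>x. (\<lambda>n. c n *\<^sub>R (f (2 *\<^sub>R (r n *\<^sub>R x)) - 2 *\<^sub>R f (r n *\<^sub>R x))) \<longlonglongrightarrow> C x"
          unfolding cE rE by (rule C(1))
        show "\<forall>x. C (2 *\<^sub>R x) = 8 *\<^sub>R C x" by (rule C(3))
        show "\<forall>x. (\<lambda>n. c n * B (r n *\<^sub>R x)) \<longlonglongrightarrow> 0"
          unfolding cE rE BE by (rule C(4))
        show "\<forall>x. norm (f (2 *\<^sub>R x) - 2 *\<^sub>R f x - C x) \<le> B x"
          unfolding BE by (rule C(2))
      qed
      show ?thesis using T1 sc by (rule conjI)
    next
      assume l1: "l = -1"
      have cE: "c = (\<lambda>n. inverse (8 ^ n))" unfolding c_def l1 by (rule ext) (simp add: power_int_minus)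
      have rE: "r = (\<lambda>n. 2 ^ n)" unfolding r_def l1 by (rule ext) (simp add: power_int_minus)
      have BE: "B = (\<lambda>x. 1/2 * (\<Sum>j. inverse ((8::real) ^ (j+1)) * \<phi> (((2::real) ^ j) *\<^sub>R x) (((2::real) ^ j) *\<^sub>R x)))"
      proof (rule ext)
        fix x
        have e0: "nat (\<bar>-1 - 1\<bar> div 2) = 1" by simp
        have e1: "(8::real) powi (int (j + 1) * -1) = inverse (8 ^ (j+1))" for j
        proof -
          have "int (j + 1) * -1 = - int (j+1)" by simp
          then show ?thesis by (simp only: power_int_minus power_int_of_nat)
        qed
        have e2: "inverse ((2::real) powi (-1 * (int (j + 1) + -1))) = 2 ^ j" for j
        proof -
          have "-1 * (int (j + 1) + -1) = - int j" by simp
          then show ?thesis by (simp only: power_int_minus power_int_of_nat inverse_inverse_eq)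
        qed
        show "B x = 1/2 * (\<Sum>j. inverse ((8::real) ^ (j+1)) * \<phi> (((2::real) ^ j) *\<^sub>R x) (((2::real) ^ j) *\<^sub>R x))"
          unfolding B_def l1 Let_def e0 e1 e2 ..
      qed
      have summ': "\<forall>x. summable (\<lambda>i. inverse ((8::real) ^ (i + 1)) * \<phi> (((2::real) ^ (i + 1)) *\<^sub>R x) (((2::real) ^ (i + 1)) *\<^sub>R x))"
      proof -
        have e: "(8::real) powi (int (i+1) * -1) = inverse (8 ^ (i+1))" "inverse ((2::real) powi (int (i+1) * -1)) = 2 ^ (i+1)" for i
        proof -
          have "int (i + 1) * -1 = - int (i+1)" by simp
          then show "(8::real) powi (int (i+1) * -1) = inverse (8 ^ (i+1))" "inverse ((2::real) powi (int (i+1) * -1)) = 2 ^ (i+1)"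
            by (simp only: power_int_minus power_int_of_nat inverse_inverse_eq)+
        qed
        show ?thesis using summ unfolding l1 e .
      qed
      have sE: "(\<lambda>n::nat. (8::real) powi (l * int n) *\<^sub>R
            (f (inverse ((2::real) powi (l * (int n - l))) *\<^sub>R x)
             - 2 *\<^sub>R f (inverse ((2::real) powi (l * int n)) *\<^sub>R x)))
          = (\<lambda>n. inverse ((8::real) ^ n) *\<^sub>R (f (2 *\<^sub>R (((2::real) ^ n) *\<^sub>R x)) - 2 *\<^sub>R f (((2::real) ^ n) *\<^sub>R x)))" for x
      proof (rule ext)
        fix n
        have "-1 * (int n - -1) = - int (Suc n)" by simp
        then have a: "inverse ((2::real) powi (-1 * (int n - -1))) = 2 * 2 ^ n"
          by (simp only: power_int_minus power_int_of_nat inverse_inverse_eq) simp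
        have b: "(8::real) powi (-1 * int n) = inverse (8 ^ n)" by (simp add: power_int_minus)
        have c: "inverse ((2::real) powi (-1 * int n)) = 2 ^ n" by (simp add: power_int_minus)
        show "(8::real) powi (l * int n) *\<^sub>R
            (f (inverse ((2::real) powi (l * (int n - l))) *\<^sub>R x)
             - 2 *\<^sub>R f (inverse ((2::real) powi (l * int n)) *\<^sub>R x))
          = inverse ((8::real) ^ n) *\<^sub>R (f (2 *\<^sub>R (((2::real) ^ n) *\<^sub>R x)) - 2 *\<^sub>R f (((2::real) ^ n) *\<^sub>R x))"
          unfolding l1 a b c by (simp only: scaleR_scaleR)
      qed
      obtain C where C: "\<forall>x. (\<lambda>n. inverse ((8::real) ^ n) *\<^sub>R (f (2 *\<^sub>R (((2::real) ^ n) *\<^sub>R x)) - 2 *\<^sub>R f (((2::real) ^ n) *\<^sub>R x))) \<longlonglongrightarrow> C x"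
        "\<forall>x. norm (f (2 *\<^sub>R x) - 2 *\<^sub>R f x - C x) \<le> 1/2 * (\<Sum>j. inverse ((8::real) ^ (j+1)) * \<phi> (((2::real) ^ j) *\<^sub>R x) (((2::real) ^ j) *\<^sub>R x))"
        "\<forall>x. C (2 *\<^sub>R x) = 8 *\<^sub>R C x"
        "\<forall>x. (\<lambda>n. inverse ((8::real) ^ n) * (1/2 * (\<Sum>j. inverse ((8::real) ^ (j+1)) * \<phi> (((2::real) ^ j) *\<^sub>R (((2::real) ^ n) *\<^sub>R x)) (((2::real) ^ j) *\<^sub>R (((2::real) ^ n) *\<^sub>R x))))) \<longlonglongrightarrow> 0"
        using case_neg[OF odd approx summ'] by blast
      have sc: "\<forall>F::'a\<Rightarrow>'b. (\<forall>x. F (2 *\<^sub>R x) = 8 *\<^sub>R F x) \<longrightarrow> (\<forall>n x. F x = c n *\<^sub>R F (r n *\<^sub>R x))"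
      proof (intro allI impI)
        fix F :: "'a \<Rightarrow> 'b" and n x
        assume h: "\<forall>x. F (2 *\<^sub>R x) = 8 *\<^sub>R F x"
        have "F ((2::real) ^ n *\<^sub>R x) = 8 ^ n *\<^sub>R F x"
          by (rule hom_pow[OF h])
        then show "F x = c n *\<^sub>R F (r n *\<^sub>R x)" unfolding cE rE by simp
      qed
      have T1: ?T1
      proof (rule exI[of _ C], intro conjI)
        show "\<forall>x. (\<lambda>n::nat. (8::real) powi (l * int n) *\<^sub>R
            (f (inverse ((2::real) powi (l * (int n - l))) *\<^sub>R x)
             - 2 *\<^sub>R f (inverse ((2::real) powi (l * int n)) *\<^sub>R x))) \<longlonglongrightarrow> C x"
          unfolding sE by (rule C(1))
        show "\<forall>x. (\<lambda>n. c n *\<^sub>R (f (2 *\<^sub>R (r n *\<^sub>R x)) - 2 *\<^sub>R f (r n *\<^sub>R x))) \<longlonglongrightarrow> C x"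
          unfolding cE rE by (rule C(1))
        show "\<forall>x. C (2 *\<^sub>R x) = 8 *\<^sub>R C x" by (rule C(3))
        show "\<forall>x. (\<lambda>n. c n * B (r n *\<^sub>R x)) \<longlonglongrightarrow> 0"
          unfolding cE rE BE by (rule C(4))
        show "\<forall>x. norm (f (2 *\<^sub>R x) - 2 *\<^sub>R f x - C x) \<le> B x"
          unfolding BE by (rule C(2))
      qed
      show ?thesis using T1 sc by (rule conjI)
    qed
    then show ?T1 ?T2 by blast+
  qed
  obtain C where C1: "\<forall>x. (\<lambda>n::nat. (8::real) powi (l * int n) *\<^sub>R
            (f (inverse ((2::real) powi (l * (int n - l))) *\<^sub>R x)
             - 2 *\<^sub>R f (inverse ((2::real) powi (l * int n)) *\<^sub>R x))) \<longlonglongrightarrow> C x"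
     and C2: "\<forall>x. (\<lambda>n. c n *\<^sub>R (f (2 *\<^sub>R (r n *\<^sub>R x)) - 2 *\<^sub>R f (r n *\<^sub>R x))) \<longlonglongrightarrow> C x"
     and C3: "\<forall>x. C (2 *\<^sub>R x) = 8 *\<^sub>R C x"
     and C4: "\<forall>x. (\<lambda>n. c n * B (r n *\<^sub>R x)) \<longlonglongrightarrow> 0"
     and C5: "\<forall>x. norm (f (2 *\<^sub>R x) - 2 *\<^sub>R f x - C x) \<le> B x"
    using main by blast
  have M: "cubic C
   \<and> (\<forall>x y. 3 *\<^sub>R C (x + 3 *\<^sub>R y) - C (3 *\<^sub>R x + y)
         = 12 *\<^sub>R (C (x + y) + C (x - y)) - 16 *\<^sub>R (C x + C y)
           + 12 *\<^sub>R C (2 *\<^sub>R y) - 4 *\<^sub>R C (2 *\<^sub>R x))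
   \<and> (\<forall>C' :: 'a \<Rightarrow> 'b. cubic C'
        \<and> (\<forall>x y. 3 *\<^sub>R C' (x + 3 *\<^sub>R y) - C' (3 *\<^sub>R x + y)
             = 12 *\<^sub>R (C' (x + y) + C' (x - y)) - 16 *\<^sub>R (C' x + C' y)
               + 12 *\<^sub>R C' (2 *\<^sub>R y) - 4 *\<^sub>R C' (2 *\<^sub>R x))
        \<and> (\<forall>x. norm (f (2 *\<^sub>R x) - 2 *\<^sub>R f x - C' x) \<le> B x)
        \<longrightarrow> C' = C)"
    by (rule master[OF odd approx C2 lim0' cnn C3 scal C4 C5])
  show ?thesis
    apply (rule exI[of _ C])
    using C1 C5 M unfolding B_def by blast
qed


end
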